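(* Let $m\ge 1$ and $n,k$ be positive integers. For $v=1,\dots,m$ let $X^{(v)}$ be a real $n\times p_v$ centered data matrix, let $X=[X^{(1)},\dots,X^{(m)}]$ with $p=p_1+\cdots+p_m$, and let $K^{(v)}=X^{(v)}{X^{(v)}}^T$. Let $X=UDV^T$ be a singular value decomposition of $X$ ($U$ $n\times n$ orthogonal, $V$ $p\times p$ orthogonal, $D$ $n\times p$ rectangular diagonal) with singular values in non-increasing order. Let $U_k$ be the first $k$ columns of $U$, $Q$ an arbitrary $k\times k$ orthogonal matrix, and $H=U_kQ$. Write $V^T=[{V^{(1)}}^T,\dots,{V^{(m)}}^T]$ with ${V^{(v)}}^T$ the $p\times p_v$ block of columns of $V^T$ for view $v$, and let ${V_{1:k}^{(v)}}^T$ be the top $k$ rows of ${V^{(v)}}^T$. Then for every $v$, $$\mathrm{tr}\big(K^{(v)}-H^TK^{(v)}H\big)=\mathrm{tr}\big(X^{(v)}{X^{(v)}}^T\big)-\Big(\mathrm{tr}\big({V_{1:k}^{(v)}}^T{X^{(v)}}^TX^{(v)}V_{1:k}^{(v)}\big)+\sum_{w\neq v}\mathrm{tr}\big({V_{1:k}^{(v)}}^T{X^{(v)}}^TX^{(w)}V_{1:k}^{(w)}\big)\Big).$$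
   Context: All matrices are real; $\mathrm{tr}$ denotes the trace. *)

theory Defs
  imports "Jordan_Normal_Form.Matrix"
begin

definition tr :: "real mat \<Rightarrow> real" where
  "tr A = (\<Sum>i<dim_row A. A $$ (i, i))"

definition orth :: "nat \<Rightarrow> real mat \<Rightarrow> bool" where
  "orth d A \<longleftrightarrow> A \<in> carrier_mat d d \<and> transpose_mat A * A = 1\<^sub>m d \<and> A * transpose_mat A = 1\<^sub>m d"

text \<open>Column offset of view v (0-indexed) inside the concatenation [X^(0),...,X^(m-1)].\<close>
definition offs :: "(nat \<Rightarrow> nat) \<Rightarrow> nat \<Rightarrow> nat" where
  "offs ps v = (\<Sum>u<v. ps u)"

end

theory Submission
  imports Defs
begin

lemma tr_comm:
  assumes "A \<in> carrier_mat a b" "B \<in> carrier_mat b a"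
  shows "tr (A * B) = tr (B * A)"
proof -
  have "tr (A * B) = (\<Sum>i<a. \<Sum>j<b. A $$ (i,j) * B $$ (j,i))"
    using assms unfolding tr_def by (auto simp: scalar_prod_def atLeast0LessThan intro!: sum.cong)
  also have "\<dots> = (\<Sum>j<b. \<Sum>i<a. B $$ (j,i) * A $$ (i,j))"
    by (subst sum.swap) (simp add: mult.commute)
  also have "\<dots> = tr (B * A)"
    using assms unfolding tr_def by (auto simp: scalar_prod_def atLeast0LessThan intro!: sum.cong)
  finally show ?thesis .
qed

lemma block_sum:
  "(\<Sum>w<m. \<Sum>c<ps w. f (offs ps w + c)) = (\<Sum>c<(\<Sum>w<m. ps w). (f c :: real))"
proof (induction m)
  case 0 then show ?case by simp
next
  case (Suc m)
  have "(\<Sum>c<(\<Sum>w<m. ps w) + ps m. f c) = (\<Sum>c<(\<Sum>w<m. ps w). f c) + (\<Sum>c<ps m. f ((\<Sum>w<m. ps w) + c))"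
    by (simp add: sum.atLeastLessThan_concat[symmetric] lessThan_atLeast0 sum.shift_bounds_nat_ivl[symmetric] add.commute)
  then show ?case using Suc by (simp add: offs_def)
qed

lemma offs_lt:
  assumes "w < m" "c < ps w"
  shows "offs ps w + c < (\<Sum>w<m. ps w)"
proof -
  have "offs ps w + ps w = (\<Sum>u<Suc w. ps u)" by (simp add: offs_def)
  also have "\<dots> \<le> (\<Sum>u<m. ps u)" using assms by (intro sum_mono2) auto
  finally show ?thesis using assms by simp
qed

theorem proposition2:
  fixes m n k :: nat
    and ps :: "nat \<Rightarrow> nat"
    and Xs :: "nat \<Rightarrow> real mat"
    and X U D V Q :: "real mat"
  assumes m_pos: "m \<ge> 1" and n_pos: "n > 0" and k_pos: "k > 0"
    and Xs_dim: "\<And>v. v < m \<Longrightarrow> Xs v \<in> carrier_mat n (ps v)"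
    and centered: "\<And>v j. v < m \<Longrightarrow> j < ps v \<Longrightarrow> (\<Sum>i<n. Xs v $$ (i, j)) = 0"
    and X_dim: "X \<in> carrier_mat n (\<Sum>v<m. ps v)"
    and X_blocks: "\<And>v i j. v < m \<Longrightarrow> i < n \<Longrightarrow> j < ps v \<Longrightarrow>
                     X $$ (i, offs ps v + j) = Xs v $$ (i, j)"
    and U_orth: "orth n U"
    and V_orth: "orth (\<Sum>v<m. ps v) V"
    and D_dim: "D \<in> carrier_mat n (\<Sum>v<m. ps v)"
    and D_diag: "\<And>i j. i < n \<Longrightarrow> j < (\<Sum>v<m. ps v) \<Longrightarrow> i \<noteq> j \<Longrightarrow> D $$ (i, j) = 0"
    and D_nonneg: "\<And>i. i < min n (\<Sum>v<m. ps v) \<Longrightarrow> D $$ (i, i) \<ge> 0"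
    and D_sorted: "\<And>i j. i \<le> j \<Longrightarrow> j < min n (\<Sum>v<m. ps v) \<Longrightarrow> D $$ (j, j) \<le> D $$ (i, i)"
    and svd: "X = U * D * transpose_mat V"
    and k_le_n: "k \<le> n" and k_le_p: "k \<le> (\<Sum>v<m. ps v)"
    and Q_orth: "orth k Q"
    and v_lt: "v < m"
  shows
    "let Uk = mat n k (\<lambda>(i, j). U $$ (i, j));
         H = Uk * Q;
         K = (\<lambda>w. Xs w * transpose_mat (Xs w));
         VtT = (\<lambda>w. mat k (ps w) (\<lambda>(i, j). transpose_mat V $$ (i, offs ps w + j)));
         Vt = (\<lambda>w. transpose_mat (VtT w))
     in tr (K v) - tr (transpose_mat H * K v * H)
        = tr (Xs v * transpose_mat (Xs v))
          - (tr (VtT v * transpose_mat (Xs v) * Xs v * Vt v)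
             + (\<Sum>w\<in>{..<m} - {v}. tr (VtT v * transpose_mat (Xs v) * Xs w * Vt w)))"
proof -
  define p where "p = (\<Sum>v<m. ps v)"
  define \<sigma> where "\<sigma> i = D $$ (i,i)" for i
  define Uk where "Uk = mat n k (\<lambda>(i, j). U $$ (i, j))"
  define VtT where "VtT = (\<lambda>w. mat k (ps w) (\<lambda>(i, j). transpose_mat V $$ (i, offs ps w + j)))"
  define Vt where "Vt = (\<lambda>w. transpose_mat (VtT w))"
  define ov where "ov = offs ps v"
  have U: "U \<in> carrier_mat n n" "transpose_mat U * U = 1\<^sub>m n" using U_orth unfolding orth_def by auto
  have V: "V \<in> carrier_mat p p" "transpose_mat V * V = 1\<^sub>m p" using V_orth unfolding orth_def p_def by auto
  have Q: "Q \<in> carrier_mat k k" "Q * transpose_mat Q = 1\<^sub>m k" using Q_orth unfolding orth_def by auto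
  have X: "X \<in> carrier_mat n p" using X_dim p_def by simp
  have Dc: "D \<in> carrier_mat n p" using D_dim p_def by simp
  have Xv: "Xs v \<in> carrier_mat n (ps v)" using Xs_dim v_lt by simp
  have tc: "transpose_mat Q \<in> carrier_mat k k" "transpose_mat Uk \<in> carrier_mat k n"
      "transpose_mat (Xs v) \<in> carrier_mat (ps v) n" using Q Xv by (auto simp: Uk_def)
  have kp: "k \<le> p" using k_le_p p_def by simp
  have Ukc: "Uk \<in> carrier_mat n k" unfolding Uk_def by simp
  have UtX: "transpose_mat U * X = D * transpose_mat V"
  proof -
    have "transpose_mat U * X = transpose_mat U * (U * (D * transpose_mat V))"
      using svd U V Dc by simp
    also have "\<dots> = (transpose_mat U * U) * (D * transpose_mat V)"
      using U V Dc by (subst assoc_mult_mat[where n\<^sub>2=n and n\<^sub>3=n and n\<^sub>4=p]) auto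
    also have "\<dots> = D * transpose_mat V" using U Dc V by simp
    finally show ?thesis .
  qed
  have XV: "X * V = U * D"
  proof -
    have "X * V = ((U * D) * transpose_mat V) * V" using svd by simp
    also have "\<dots> = (U * D) * (transpose_mat V * V)"
      by (rule assoc_mult_mat[where n\<^sub>1=n and n\<^sub>2=p and n\<^sub>3=p and n\<^sub>4=p]) (use U V Dc in auto)
    also have "\<dots> = U * D" using U Dc V by simp
    finally show ?thesis .
  qed
  have E1: "(\<Sum>b<n. U $$ (b,i) * X $$ (b,c)) = \<sigma> i * V $$ (c,i)" if "i < k" "c < p" for i c
  proof -
    have "(\<Sum>b<n. U $$ (b,i) * X $$ (b,c)) = (transpose_mat U * X) $$ (i,c)"
      using that U X k_le_n by (auto simp: scalar_prod_def atLeast0LessThan intro!: sum.cong)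
    also have "\<dots> = (D * transpose_mat V) $$ (i,c)" by (simp add: UtX)
    also have "\<dots> = (\<Sum>l<p. D $$ (i,l) * V $$ (c,l))"
      using that Dc V k_le_n by (auto simp: scalar_prod_def atLeast0LessThan intro!: sum.cong)
    also have "\<dots> = (\<Sum>l<p. if l = i then D $$ (i,i) * V $$ (c,i) else 0)"
      using that D_diag k_le_n by (intro sum.cong) (auto simp: p_def)
    also have "\<dots> = \<sigma> i * V $$ (c,i)" using that k_le_p by (simp add: \<sigma>_def p_def)
    finally show ?thesis .
  qed
  have E2: "(\<Sum>c<p. X $$ (b,c) * V $$ (c,i)) = U $$ (b,i) * \<sigma> i" if "i < k" "b < n" for i b
  proof -
    have "(\<Sum>c<p. X $$ (b,c) * V $$ (c,i)) = (X * V) $$ (b,i)"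
      using that V X kp by (auto simp: scalar_prod_def atLeast0LessThan intro!: sum.cong)
    also have "\<dots> = (U * D) $$ (b,i)" by (simp add: XV)
    also have "\<dots> = (\<Sum>l<n. U $$ (b,l) * D $$ (l,i))"
      using that Dc U kp by (auto simp: scalar_prod_def atLeast0LessThan intro!: sum.cong)
    also have "\<dots> = (\<Sum>l<n. if l = i then U $$ (b,i) * D $$ (i,i) else 0)"
      using that D_diag k_le_p by (intro sum.cong) (auto simp: p_def)
    also have "\<dots> = U $$ (b,i) * \<sigma> i" using that k_le_n by (simp add: \<sigma>_def)
    finally show ?thesis .
  qed
  have Xsw: "Xs w $$ (b,c) = X $$ (b, offs ps w + c)" if "w < m" "b < n" "c < ps w" for w b c
    using X_blocks that by simp
  have ovlt: "ov + a < p" if "a < ps v" for a using offs_lt[of v m a ps] v_lt that by (simp add: ov_def p_def)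
  define T where "T = (\<Sum>i<k. \<Sum>a<ps v. (\<sigma> i * V $$ (ov + a, i))^2)"
  have L: "tr (transpose_mat (Uk * Q) * (Xs v * transpose_mat (Xs v)) * (Uk * Q)) = T"
  proof -
    define M where "M = transpose_mat Uk * (Xs v * transpose_mat (Xs v)) * Uk"
    define W where "W = transpose_mat (Xs v) * Uk"
    have Wc: "W \<in> carrier_mat (ps v) k" unfolding W_def using Xv Ukc by auto
    have Mc: "M \<in> carrier_mat k k" unfolding M_def using Xv Ukc by auto
    define K where "K = Xs v * transpose_mat (Xs v)"
    have Kc: "K \<in> carrier_mat n n" unfolding K_def using Xv by auto
    have e0: "transpose_mat (Uk * Q) = transpose_mat Q * transpose_mat Uk" by (rule transpose_mult[OF Ukc Q(1)])
    have e1: "transpose_mat Q * transpose_mat Uk * K = transpose_mat Q * (transpose_mat Uk * K)"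
      using assoc_mult_mat[of "transpose_mat Q" k k "transpose_mat Uk" n K n] tc Kc by auto
    have e2: "transpose_mat Q * (transpose_mat Uk * K) * Uk = transpose_mat Q * (transpose_mat Uk * K * Uk)"
      using assoc_mult_mat[of "transpose_mat Q" k k "transpose_mat Uk * K" n Uk k] tc Kc Ukc by auto
    have e3: "transpose_mat Q * transpose_mat Uk * K * (Uk * Q) = transpose_mat Q * transpose_mat Uk * K * Uk * Q"
      using assoc_mult_mat[of "transpose_mat Q * transpose_mat Uk * K" k n Uk k Q k] tc Kc Ukc Q by auto
    have e4: "transpose_mat Q * M * Q = transpose_mat Q * (M * Q)"
      using assoc_mult_mat[of "transpose_mat Q" k k M k Q k] tc Mc Q by auto
    have "transpose_mat (Uk * Q) * (Xs v * transpose_mat (Xs v)) * (Uk * Q) = transpose_mat Q * (M * Q)"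
    proof -
      have "transpose_mat (Uk * Q) * K * (Uk * Q) = transpose_mat Q * transpose_mat Uk * K * (Uk * Q)" by (simp only: e0)
      also have "\<dots> = transpose_mat Q * transpose_mat Uk * K * Uk * Q" by (rule e3)
      also have "\<dots> = transpose_mat Q * (transpose_mat Uk * K) * Uk * Q" by (simp only: e1)
      also have "\<dots> = transpose_mat Q * (transpose_mat Uk * K * Uk) * Q" by (simp only: e2)
      also have "\<dots> = transpose_mat Q * (M * Q)" using e4 by (simp only: M_def K_def)
      finally show ?thesis by (simp only: K_def)
    qed
    then have "tr (transpose_mat (Uk * Q) * (Xs v * transpose_mat (Xs v)) * (Uk * Q)) = tr ((M * Q) * transpose_mat Q)"
      using tr_comm[of "transpose_mat Q" k k "M * Q"] Mc Q by auto
    also have "\<dots> = tr M" using Mc Q by simp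
    also have "M = transpose_mat W * W"
    proof -
      have "transpose_mat W = transpose_mat Uk * Xs v"
        unfolding W_def using transpose_mult[of "transpose_mat (Xs v)" "ps v" n Uk k] tc Ukc by simp
      moreover have "transpose_mat Uk * Xs v * (transpose_mat (Xs v) * Uk) = transpose_mat Uk * (Xs v * (transpose_mat (Xs v) * Uk))"
        using assoc_mult_mat[of "transpose_mat Uk" k n "Xs v" "ps v" "transpose_mat (Xs v) * Uk" k] tc Ukc Xv by auto
      moreover have "M = transpose_mat Uk * (Xs v * transpose_mat (Xs v) * Uk)"
        unfolding M_def using assoc_mult_mat[of "transpose_mat Uk" k n "Xs v * transpose_mat (Xs v)" n Uk k] tc Ukc Xv by auto
      moreover have "Xs v * transpose_mat (Xs v) * Uk = Xs v * (transpose_mat (Xs v) * Uk)"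
        using assoc_mult_mat[of "Xs v" n "ps v" "transpose_mat (Xs v)" n Uk k] tc Ukc Xv by auto
      ultimately show ?thesis unfolding W_def by simp
    qed
    also have "tr (transpose_mat W * W) = (\<Sum>i<k. \<Sum>a<ps v. W $$ (a,i) * W $$ (a,i))"
      unfolding tr_def using Wc by (auto simp: scalar_prod_def atLeast0LessThan intro!: sum.cong)
    also have "\<dots> = T" unfolding T_def power2_eq_square
    proof (intro sum.cong refl)
      fix i a assume ia: "i \<in> {..<k}" "a \<in> {..<ps v}"
      have "W $$ (a,i) = (\<Sum>b<n. U $$ (b,i) * X $$ (b, ov + a))"
        unfolding W_def Uk_def using ia Xv k_le_n Xsw[OF v_lt]
        by (auto simp: scalar_prod_def atLeast0LessThan ov_def mult.commute intro!: sum.cong)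
      also have "\<dots> = \<sigma> i * V $$ (ov + a, i)" using E1 ia ovlt by simp
      finally show "W $$ (a,i) * W $$ (a,i) = \<sigma> i * V $$ (ov + a, i) * (\<sigma> i * V $$ (ov + a, i))" by simp
    qed
    finally show ?thesis .
  qed
  have R: "tr (VtT v * transpose_mat (Xs v) * Xs v * Vt v)
             + (\<Sum>w\<in>{..<m} - {v}. tr (VtT v * transpose_mat (Xs v) * Xs w * Vt w)) = T"
  proof -
    define A where "A = VtT v * transpose_mat (Xs v)"
    have Ac: "A \<in> carrier_mat k n" unfolding A_def VtT_def using tc by auto
    define B where "B w b i = (\<Sum>c<ps w. X $$ (b, offs ps w + c) * V $$ (offs ps w + c, i))" for w b i
    have TW: "tr (VtT v * transpose_mat (Xs v) * Xs w * Vt w) = (\<Sum>i<k. \<Sum>b<n. A $$ (i,b) * B w b i)"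
      if w: "w < m" for w
    proof -
      have Xw: "Xs w \<in> carrier_mat n (ps w)" using Xs_dim w by simp
      have Vtc: "Vt w \<in> carrier_mat (ps w) k" unfolding Vt_def VtT_def by auto
      have "VtT v * transpose_mat (Xs v) * Xs w * Vt w = A * (Xs w * Vt w)"
        unfolding A_def using assoc_mult_mat[of "VtT v * transpose_mat (Xs v)" k n "Xs w" "ps w" "Vt w" k] Ac Xw Vtc
        by (auto simp: A_def)
      also have "tr (A * (Xs w * Vt w)) = (\<Sum>i<k. \<Sum>b<n. A $$ (i,b) * (Xs w * Vt w) $$ (b,i))"
        unfolding tr_def using Ac Xw Vtc by (auto simp: scalar_prod_def atLeast0LessThan intro!: sum.cong)
      also have "\<dots> = (\<Sum>i<k. \<Sum>b<n. A $$ (i,b) * B w b i)"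
      proof (intro sum.cong refl)
        fix i b assume ib: "i \<in> {..<k}" "b \<in> {..<n}"
        have "(Xs w * Vt w) $$ (b,i) = B w b i"
          unfolding B_def using ib Xw Vtc Xsw[OF w] offs_lt[of w m _ ps] w V(1) kp
          by (auto simp: scalar_prod_def atLeast0LessThan Vt_def VtT_def p_def intro!: sum.cong)
        then show "A $$ (i,b) * (Xs w * Vt w) $$ (b,i) = A $$ (i,b) * B w b i" by simp
      qed
      finally show ?thesis .
    qed
    have "tr (VtT v * transpose_mat (Xs v) * Xs v * Vt v)
             + (\<Sum>w\<in>{..<m} - {v}. tr (VtT v * transpose_mat (Xs v) * Xs w * Vt w))
          = (\<Sum>w<m. tr (VtT v * transpose_mat (Xs v) * Xs w * Vt w))"
      using v_lt by (simp add: sum.remove[of "{..<m}" v])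
    also have "\<dots> = (\<Sum>w<m. \<Sum>i<k. \<Sum>b<n. A $$ (i,b) * B w b i)" using TW by simp
    also have "\<dots> = (\<Sum>i<k. \<Sum>b<n. A $$ (i,b) * (\<Sum>w<m. B w b i))"
      by (simp add: sum_distrib_left sum.swap[of _ "{..<m}"])
    also have "\<dots> = (\<Sum>i<k. \<Sum>b<n. A $$ (i,b) * (U $$ (b,i) * \<sigma> i))"
    proof (intro sum.cong refl)
      fix i b assume ib: "i \<in> {..<k}" "b \<in> {..<n}"
      have "(\<Sum>w<m. B w b i) = (\<Sum>c<p. X $$ (b,c) * V $$ (c,i))"
        unfolding B_def p_def by (rule block_sum)
      then show "A $$ (i,b) * (\<Sum>w<m. B w b i) = A $$ (i,b) * (U $$ (b,i) * \<sigma> i)" using E2 ib by simp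
    qed
    also have "\<dots> = T" unfolding T_def power2_eq_square
    proof (rule sum.cong[OF refl])
      fix i assume i: "i \<in> {..<k}"
      have Aib: "A $$ (i,b) = (\<Sum>a<ps v. V $$ (ov + a, i) * X $$ (b, ov + a))" if b: "b < n" for b
        unfolding A_def VtT_def using i b Xv Xsw[OF v_lt] ovlt V(1) kp
        by (auto simp: scalar_prod_def atLeast0LessThan ov_def intro!: sum.cong)
      have "(\<Sum>b<n. A $$ (i,b) * (U $$ (b,i) * \<sigma> i))
          = (\<Sum>b<n. \<Sum>a<ps v. \<sigma> i * V $$ (ov + a, i) * (U $$ (b,i) * X $$ (b, ov + a)))"
        using Aib by (simp add: sum_distrib_left mult_ac)
      also have "\<dots> = (\<Sum>a<ps v. \<sigma> i * V $$ (ov + a, i) * (\<Sum>b<n. U $$ (b,i) * X $$ (b, ov + a)))"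
        by (simp add: sum_distrib_left sum.swap[of _ "{..<n}"])
      also have "\<dots> = (\<Sum>a<ps v. \<sigma> i * V $$ (ov + a, i) * (\<sigma> i * V $$ (ov + a, i)))"
        using E1 i ovlt by simp
      finally show "(\<Sum>b<n. A $$ (i,b) * (U $$ (b,i) * \<sigma> i)) = (\<Sum>a<ps v. \<sigma> i * V $$ (ov + a, i) * (\<sigma> i * V $$ (ov + a, i)))" .
    qed
    finally show ?thesis .
  qed
  show ?thesis unfolding Let_def Uk_def[symmetric] VtT_def[symmetric] Vt_def[symmetric]
    using L R[unfolded Vt_def] by simp
qed

end
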